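(* Let $F$, $H$ and $R$ be fixed monic polynomials in $\mathbb{F}_q[T]$ with $F\mid R$, and let $z$ be a non-negative integer with $z<\deg(R)$. Then \[ \sum_{\substack{A,B\in\mathbb{A}^+\\ \deg(AB)=z\\ AH\equiv B\ (\mathrm{mod}\ F)\\ AH\neq B\\ (ABH,R)=1}}\frac{1}{|AB|^{\frac{1}{2}}}\ll\frac{q^{\frac{z}{2}}(z+1)|H|}{|F|}. \]
   Context: $q$ is a power of an odd prime, $\mathbb{A}=\mathbb{F}_q[T]$, $\mathbb{A}^+$ is the set of monic polynomials in $\mathbb{A}$, and $|f|=q^{\deg(f)}$ for $f\in\mathbb{A}$. *)

theory Defs
  imports "HOL-Computational_Algebra.Computational_Algebra" "HOL-Number_Theory.Cong"
begin

definition pabs :: "'a::{field,finite} poly \<Rightarrow> real" where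
  "pabs f = real (card (UNIV::'a set)) ^ degree f"

end

theory Submission imports Defs "HOL-Library.FuncSet" begin

lemma card_deg_le:
  "finite {P::'a::{zero,finite} poly. degree P \<le> N} \<and> card {P::'a poly. degree P \<le> N} \<le> card (UNIV::'a set) ^ Suc N"
proof -
  let ?f = "\<lambda>P::'a poly. \<lambda>i\<in>{..N}. coeff P i"
  let ?T = "{..N} \<rightarrow>\<^sub>E (UNIV::'a set)"
  have inj: "inj_on ?f {P. degree P \<le> N}"
  proof (rule inj_onI)
    fix P Q assume P: "P \<in> {P. degree P \<le> N}" and Q: "Q \<in> {P. degree P \<le> N}" and e: "?f P = ?f Q"
    show "P = Q"
    proof (rule poly_eqI)
      fix i show "coeff P i = coeff Q i"
      proof (cases "i \<le> N")
        case True then show ?thesis using fun_cong[OF e, of i] by simp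
      next
        case False then show ?thesis using P Q by (simp add: coeff_eq_0)
      qed
    qed
  qed
  have sub: "?f ` {P. degree P \<le> N} \<subseteq> ?T" by (simp add: image_subset_iff)
  have fin: "finite ?T" by (simp add: finite_PiE)
  have cT: "card ?T = card (UNIV::'a set) ^ Suc N" by (simp add: card_PiE)
  show ?thesis using inj_on_finite[OF inj sub fin] card_inj_on_le[OF inj sub fin] cT by simp
qed

lemma decode:
  fixes K r :: "'a::field poly"
  assumes "r = 0 \<or> degree r < b"
  shows "(monom 1 b * K + r) div monom 1 b = K" "(monom 1 b * K + r) mod monom 1 b = r"
proof -
  have d: "r div monom 1 b = 0" "r mod monom 1 b = r" using assms
    by (auto simp: degree_monom_eq div_poly_less mod_poly_less)
  have nz: "monom (1::'a) b \<noteq> 0" by simp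
  show "(monom 1 b * K + r) div monom 1 b = K" using d nz
    by (metis add.commute add_0 div_mult_self2 mult.commute)
  show "(monom 1 b * K + r) mod monom 1 b = r" using d
    by (metis add.commute mod_mult_self2 mult.commute)
qed

lemma monic_sub:
  fixes B :: "'a::field poly"
  assumes "lead_coeff B = 1"
  shows "B - monom 1 (degree B) = 0 \<or> degree (B - monom 1 (degree B)) < degree B"
proof (cases "B - monom 1 (degree B) = 0")
  case False
  have le: "degree (B - monom 1 (degree B)) \<le> degree B"
    using degree_diff_le_max[of B "monom 1 (degree B)"] by (simp add: degree_monom_eq)
  have "coeff (B - monom 1 (degree B)) (degree B) = 0" using assms by simp
  then have "degree (B - monom 1 (degree B)) \<noteq> degree B" using False leading_coeff_0_iff by metis
  then show ?thesis using le by simp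
qed simp


definition enc :: "'a::field poly \<Rightarrow> 'a poly \<Rightarrow> 'a poly" where
  "enc U K = monom 1 (degree U) * K + (U - monom 1 (degree U))"

lemma enc_inj:
  fixes U1 U2 K1 K2 :: "'a::field poly"
  assumes "lead_coeff U1 = 1" "lead_coeff U2 = 1" "degree U1 = degree U2" "enc U1 K1 = enc U2 K2"
  shows "U1 = U2 \<and> K1 = K2"
proof -
  define b where "b = degree U1"
  have eP: "monom 1 b * K1 + (U1 - monom 1 b) = monom 1 b * K2 + (U2 - monom 1 b)"
    using assms by (simp add: enc_def b_def)
  have r1: "U1 - monom 1 b = 0 \<or> degree (U1 - monom 1 b) < b" using monic_sub[OF assms(1)] b_def by simp
  have r2: "U2 - monom 1 b = 0 \<or> degree (U2 - monom 1 b) < b" using monic_sub[OF assms(2)] b_def assms(3) by simp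
  have "K1 = K2" using decode(1)[OF r1, of K1] decode(1)[OF r2, of K2] eP by simp
  moreover have "U1 = U2" using decode(2)[OF r1, of K1] decode(2)[OF r2, of K2] eP by simp
  ultimately show ?thesis by simp
qed

lemma enc_deg:
  fixes U K :: "'a::field poly"
  assumes "lead_coeff U = 1" "K \<noteq> 0" "degree U + degree K \<le> N"
  shows "degree (enc U K) \<le> N"
proof -
  have "degree (monom (1::'a) (degree U) * K) \<le> N"
    using assms by (simp add: degree_mult_eq degree_monom_eq)
  moreover have "degree (U - monom 1 (degree U)) \<le> N"
    using monic_sub[OF assms(1)] assms(3) by auto
  ultimately show ?thesis unfolding enc_def by (meson degree_add_le)
qed

lemma count_S:
  fixes F H R :: "'a::{field,finite} poly" and z :: nat
  assumes F0: "F \<noteq> 0" and H0: "H \<noteq> 0"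
  defines "S \<equiv> {(A,B). lead_coeff A = 1 \<and> lead_coeff B = 1 \<and> degree (A*B) = z \<and>
                       [A*H = B] (mod F) \<and> A*H \<noteq> B \<and> coprime (A*B*H) R}"
  shows "finite S \<and> card S * card (UNIV::'a set) ^ degree F \<le> 2 * (z+1) * card (UNIV::'a set) ^ (z + degree H + 1)"
proof (cases "S = {}")
  case True then show ?thesis by simp
next
  case False
  let ?q = "card (UNIV::'a set)"
  define f where "f = degree F"
  define h where "h = degree H"
  define N where "N = z + h - f"
  define K where "K = (\<lambda>(A,B). (A*H - B) div F)"
  define \<phi> where "\<phi> = (\<lambda>(A::'a poly,B::'a poly). if degree B \<le> degree A + h
      then (True, degree B, enc B (K (A,B))) else (False, degree A, enc A (K (A,B))))"
  have key: "lead_coeff A = 1 \<and> lead_coeff B = 1 \<and> F * K (A,B) = A*H - B \<and> K (A,B) \<noteq> 0 \<and> f \<le> z + h \<and> degree A \<le> z \<and> degree B \<le> z \<and>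
     (if degree B \<le> degree A + h then degree B + degree (K (A,B)) \<le> N else degree A + degree (K (A,B)) \<le> N)"
    if "(A,B) \<in> S" for A B
  proof -
    from that have A1: "lead_coeff A = 1" and B1: "lead_coeff B = 1" and dz: "degree (A*B) = z"
      and cg: "[A*H = B] (mod F)" and ne: "A*H \<noteq> B" by (auto simp: S_def)
    have A0: "A \<noteq> 0" and B0: "B \<noteq> 0" using A1 B1 by auto
    have dv: "F dvd A*H - B" using cg by (simp add: cong_iff_dvd_diff)
    have FK: "F * K (A,B) = A*H - B" using dv by (simp add: K_def)
    have K0: "K (A,B) \<noteq> 0" using FK ne by auto
    have dAB: "degree A + degree B = z" using dz A0 B0 by (simp add: degree_mult_eq)
    have dFK: "degree (F * K (A,B)) = f + degree (K (A,B))" using F0 K0 by (simp add: degree_mult_eq f_def)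
    have dAH: "degree (A*H) = degree A + h" using A0 H0 by (simp add: degree_mult_eq h_def)
    have "degree (A*H - B) \<le> max (degree A + h) (degree B)" using degree_diff_le_max[of "A*H" B] dAH by simp
    then have m: "f + degree (K (A,B)) \<le> max (degree A + h) (degree B)" using FK dFK by simp
    show ?thesis using A1 B1 FK K0 m dAB unfolding N_def by (auto simp: max_def split: if_splits)
  qed
  obtain A0 B0 where "(A0,B0) \<in> S" using False by auto
  then have fle: "f \<le> z + h" using key by blast
  have inj: "inj_on \<phi> S"
  proof (rule inj_onI)
    fix x y assume x: "x \<in> S" and y: "y \<in> S" and e: "\<phi> x = \<phi> y"
    obtain A1 B1 where x': "x = (A1,B1)" by (cases x)
    obtain A2 B2 where y': "y = (A2,B2)" by (cases y)
    note k1 = key[of A1 B1] and k2 = key[of A2 B2]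
    have k1: "lead_coeff A1 = 1" "lead_coeff B1 = 1" "F * K (A1,B1) = A1*H - B1" using k1 x x' by auto
    have k2: "lead_coeff A2 = 1" "lead_coeff B2 = 1" "F * K (A2,B2) = A2*H - B2" using k2 y y' by auto
    show "x = y"
    proof (cases "degree B1 \<le> degree A1 + h")
      case True
      then have c2: "degree B2 \<le> degree A2 + h" using e x' y' by (simp add: \<phi>_def split: if_splits)
      have "degree B1 = degree B2" "enc B1 (K (A1,B1)) = enc B2 (K (A2,B2))"
        using e x' y' True c2 by (simp_all add: \<phi>_def)
      then have BK: "B1 = B2 \<and> K (A1,B1) = K (A2,B2)" using enc_inj k1 k2 by blast
      then have "A1 * H = A2 * H" using k1 k2 by (metis diff_add_cancel)
      then have "A1 = A2" using H0 by simp
      then show ?thesis using x' y' BK by simp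
    next
      case False
      then have c2: "\<not> degree B2 \<le> degree A2 + h" using e x' y' by (simp add: \<phi>_def split: if_splits)
      have "degree A1 = degree A2" "enc A1 (K (A1,B1)) = enc A2 (K (A2,B2))"
        using e x' y' False c2 by (simp_all add: \<phi>_def)
      then have AK: "A1 = A2 \<and> K (A1,B1) = K (A2,B2)" using enc_inj k1 k2 by blast
      then have "B1 = B2" using k1 k2 by (metis diff_diff_eq2 diff_add_cancel add_diff_cancel_left')
      then show ?thesis using x' y' AK by simp
    qed
  qed
  have sub: "\<phi> ` S \<subseteq> (UNIV::bool set) \<times> {..z} \<times> {P. degree P \<le> N}"
  proof
    fix p assume "p \<in> \<phi> ` S"
    then obtain A B where AB: "(A,B) \<in> S" and p: "p = \<phi> (A,B)" by auto
    note k = key[OF AB]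
    show "p \<in> (UNIV::bool set) \<times> {..z} \<times> {P. degree P \<le> N}"
    proof (cases "degree B \<le> degree A + h")
      case True
      then show ?thesis using p k enc_deg[of B "K (A,B)" N] by (simp add: \<phi>_def)
    next
      case False
      then show ?thesis using p k enc_deg[of A "K (A,B)" N] by (simp add: \<phi>_def)
    qed
  qed
  have fin: "finite ((UNIV::bool set) \<times> {..z} \<times> {P::'a poly. degree P \<le> N})" using card_deg_le[of N] by (intro finite_cartesian_product) auto
  have "card S \<le> card ((UNIV::bool set) \<times> {..z} \<times> {P::'a poly. degree P \<le> N})" by (rule card_inj_on_le[OF inj sub fin])
  also have "\<dots> = 2 * (z+1) * card {P::'a poly. degree P \<le> N}" by (simp add: card_cartesian_product)
  also have "\<dots> \<le> 2 * (z+1) * ?q ^ Suc N" using card_deg_le[of N] by (intro mult_left_mono) auto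
  finally have c: "card S \<le> 2 * (z+1) * ?q ^ Suc N" .
  have "card S * ?q ^ f \<le> 2 * (z+1) * ?q ^ Suc N * ?q ^ f" using c by simp
  also have "\<dots> = 2 * (z+1) * ?q ^ (Suc N + f)" by (simp add: power_add algebra_simps)
  also have "Suc N + f = z + h + 1" using fle by (simp add: N_def)
  finally show ?thesis using inj_on_finite[OF inj sub fin] by (simp add: f_def h_def)
qed


theorem lemma3p3:
  assumes "odd (card (UNIV::'a::{field,finite} set))"
  shows "\<exists>C>0. \<forall>(F::'a poly) H R (z::nat).
     lead_coeff F = 1 \<and> lead_coeff H = 1 \<and> lead_coeff R = 1 \<and> F dvd R \<and> z < degree R \<longrightarrow>
     (\<Sum>(A,B)\<in>{(A,B). lead_coeff A = 1 \<and> lead_coeff B = 1 \<and> degree (A*B) = z \<and>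
                       [A*H = B] (mod F) \<and> A*H \<noteq> B \<and> coprime (A*B*H) R}.
        1 / sqrt (pabs (A*B)))
     \<le> C * (real (card (UNIV::'a set)) powr (real z / 2)) * real (z+1) * pabs H / pabs F"
proof -
  let ?q = "real (card (UNIV::'a set))"
  have q0: "?q > 0" by (simp add: finite_UNIV_card_ge_0)
  show ?thesis
  proof (intro exI[of _ "2 * ?q"] conjI allI impI)
    show "2 * ?q > 0" using q0 by simp
    fix F H R :: "'a poly" and z :: nat
    assume h: "lead_coeff F = 1 \<and> lead_coeff H = 1 \<and> lead_coeff R = 1 \<and> F dvd R \<and> z < degree R"
    define S where "S = {(A,B). lead_coeff A = 1 \<and> lead_coeff B = 1 \<and> degree (A*B) = z \<and>
                       [A*H = B] (mod F) \<and> A*H \<noteq> B \<and> coprime (A*B*H) R}"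
    have F0: "F \<noteq> 0" and H0: "H \<noteq> 0" using h by auto
    have cS: "finite S \<and> card S * card (UNIV::'a set) ^ degree F \<le> 2 * (z+1) * card (UNIV::'a set) ^ (z + degree H + 1)"
      using count_S[OF F0 H0, of z R] unfolding S_def by simp
    define s where "s = ?q powr (real z / 2)"
    have s0: "s > 0" using q0 by (simp add: s_def)
    have s2: "s * s = ?q ^ z" using q0 unfolding s_def
      by (simp add: powr_add[symmetric] powr_realpow)
    have sq: "sqrt (?q ^ z) = s" using s0 s2 by (metis less_eq_real_def power2_eq_square real_sqrt_abs abs_of_nonneg)
    have "(\<Sum>(A,B)\<in>S. 1 / sqrt (pabs (A*B))) = (\<Sum>(A,B)\<in>S. 1 / s)"
      by (rule sum.cong) (auto simp: S_def pabs_def sq[symmetric] simp del: degree_mult_eq_0)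
    also have "\<dots> = real (card S) / s" by simp
    also have "\<dots> \<le> 2 * ?q * s * real (z+1) * pabs H / pabs F"
    proof -
      have c: "real (card S) * ?q ^ degree F \<le> 2 * (real z + 1) * ?q ^ (z + degree H + 1)"
        using cS by (metis (mono_tags) of_nat_le_iff of_nat_mult of_nat_power of_nat_add of_nat_1 of_nat_numeral)
      have pF: "pabs F > 0" using q0 by (simp add: pabs_def)
      have "real (card S) * pabs F \<le> 2 * ?q * (s * s) * real (z+1) * pabs H"
        using c s2 by (simp add: pabs_def power_add algebra_simps)
      then show ?thesis using pF s0 by (simp add: field_simps)
    qed
    finally show "(\<Sum>(A,B)\<in>{(A,B). lead_coeff A = 1 \<and> lead_coeff B = 1 \<and> degree (A*B) = z \<and>
                       [A*H = B] (mod F) \<and> A*H \<noteq> B \<and> coprime (A*B*H) R}.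
        1 / sqrt (pabs (A*B)))
     \<le> 2 * ?q * (?q powr (real z / 2)) * real (z+1) * pabs H / pabs F" by (simp add: S_def s_def)
  qed
qed

end
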